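(* There exists $\varphi_1>\frac{\pi}{2}$ such that for every $s\in\mathbb C$ with $\frac{\pi}{2}<|\arg s|<\varphi_1$ there exists $\sigma>0$ with $s\in\Omega_\sigma$ and $\sigma<(\Re\sqrt s)^2$.
   Context: $\sqrt z$ denotes the branch with $\Re\sqrt z>0$ for $|\arg z|<\pi$. For $\sigma>0$: $\Omega^1_\sigma=\{s:\Re s\le0,\ \sigma<|\Im s|\}\cup\{s:\Re s>0,\ \sigma<|s|\}$; $\Omega^2_\sigma=\{s:\ \sigma<|s|+\Re s,\ \sigma>\frac{-\Re(s)|s|}{2(|s|+\Re s)}\}$; $\Omega^3_\sigma=\{s\neq0:\ \sigma(|s|-\sigma+\Re s)-(\sigma(1+\frac{\Re s}{|s|})+\frac12\Re s)^2>0\}$; $\Omega_\sigma=\Omega^1_\sigma\cap(\Omega^2_\sigma\cup\Omega^3_\sigma)$. *)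

theory Defs
  imports "HOL-Analysis.Analysis"
begin

definition Omega1 :: "real \<Rightarrow> complex set" where
  "Omega1 \<sigma> = {s. Re s \<le> 0 \<and> \<sigma> < \<bar>Im s\<bar>} \<union> {s. Re s > 0 \<and> \<sigma> < cmod s}"

definition Omega2 :: "real \<Rightarrow> complex set" where
  "Omega2 \<sigma> = {s. \<sigma> < cmod s + Re s \<and> \<sigma> > - Re s * cmod s / (2 * (cmod s + Re s))}"

definition Omega3 :: "real \<Rightarrow> complex set" where
  "Omega3 \<sigma> = {s. s \<noteq> 0 \<and>
     \<sigma> * (cmod s - \<sigma> + Re s) - (\<sigma> * (1 + Re s / cmod s) + Re s / 2)^2 > 0}"

definition Omega :: "real \<Rightarrow> complex set" where
  "Omega \<sigma> = Omega1 \<sigma> \<inter> (Omega2 \<sigma> \<union> Omega3 \<sigma>)"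

end

theory Submission
  imports Defs
begin

lemma alg:
  fixes r x y :: real
  assumes r: "r > 0" and x: "x < 0" and x3: "3 * x > - r" and ry: "r^2 = x^2 + y^2"
  defines "\<sigma> \<equiv> ((r + x) / 2 + (- x * r) / (2 * (r + x))) / 2"
  shows "\<sigma> > 0" "\<sigma> < \<bar>y\<bar>" "\<sigma> < r + x" "\<sigma> > - x * r / (2 * (r + x))" "\<sigma> < (r + x) / 2"
proof -
  have rx: "r + x > 0" using x3 r by linarith
  have key: "- x * r / (2 * (r + x)) < (r + x) / 2"
  proof -
    have h1: "r * (r + 3 * x) > 0" using r x3 by simp
    have h2: "x * x \<ge> 0" by simp
    have e: "(r + x) * (r + x) + x * r = r * (r + 3 * x) + x * x" by (simp add: algebra_simps)
    have "- x * r < (r + x) * (r + x)" using h1 h2 e by linarith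
    thus ?thesis using rx by (simp add: field_simps)
  qed
  have pos: "- x * r / (2 * (r + x)) > 0" 
  proof -
    have "- x * r > 0" using x r by (simp add: mult_neg_pos)
    thus ?thesis using rx by (intro divide_pos_pos) auto
  qed
  have h: "a < b" if "a < (b::real) / 2" "0 < b" for a b using that by linarith
  have m: "a < ((b::real) + a) / 2" "(b + a) / 2 < b" if "a < b" for a b using that by simp_all
  note mm = m[OF key]
  show "\<sigma> > - x * r / (2 * (r + x))" using mm unfolding \<sigma>_def by (simp add: add.commute)
  show "\<sigma> < (r + x) / 2" using mm unfolding \<sigma>_def by (simp add: add.commute)
  show "\<sigma> > 0" using `\<sigma> > - x * r / (2 * (r + x))` pos by linarith
  show "\<sigma> < r + x" using h[OF `\<sigma> < (r + x) / 2` rx] .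
  have e: "y^2 - (r + x)^2 = (- 2 * x) * (r + x)" using ry by (simp add: power2_eq_square algebra_simps)
  have "(- 2 * x) * (r + x) \<ge> 0" using mult_nonneg_nonneg[of "- 2 * x" "r + x"] x rx by linarith
  hence "y^2 \<ge> (r + x)^2" using e by linarith
  hence "\<bar>r + x\<bar> \<le> \<bar>y\<bar>" by (simp add: abs_le_square_iff)
  hence "\<bar>y\<bar> \<ge> r + x" by linarith
  thus "\<sigma> < \<bar>y\<bar>" using h[OF `\<sigma> < (r + x) / 2` rx] by linarith
qed

theorem mainTheorem19:
  shows "\<exists>\<phi>1 > pi / 2. \<forall>s :: complex. pi / 2 < \<bar>Arg s\<bar> \<and> \<bar>Arg s\<bar> < \<phi>1 \<longrightarrow>
           (\<exists>\<sigma> > 0. s \<in> Omega \<sigma> \<and> \<sigma> < (Re (csqrt s))^2)"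
proof (rule exI[of _ "arccos (-1/3)"], intro conjI allI impI)
  have a0: "0 \<le> arccos (-1/3)" "arccos (-1/3) \<le> pi"
    by (auto intro: arccos_lbound arccos_ubound)
  have ca: "cos (arccos (-1/3)) = -1/3" by (simp add: cos_arccos)
  show "pi / 2 < arccos (- 1 / 3)"
    using cos_mono_less_eq[of "arccos (-1/3)" "pi/2"] a0 ca by simp
  fix s :: complex
  assume A: "pi / 2 < \<bar>Arg s\<bar> \<and> \<bar>Arg s\<bar> < arccos (- 1 / 3)"
  have s0: "s \<noteq> 0" using A by (auto simp: Arg_zero)
  have r: "cmod s > 0" using s0 by simp
  have bnd: "\<bar>Arg s\<bar> \<le> pi" using Arg_bounded[of s] by linarith
  have cA: "cos \<bar>Arg s\<bar> = Re s / cmod s" using cos_Arg[OF s0] by (simp add: abs_if)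
  have "cos \<bar>Arg s\<bar> < 0" using cos_lt_zero_pi[of "\<bar>Arg s\<bar>"] A bnd by linarith
  hence x: "Re s < 0" using cA r by (simp add: divide_less_0_iff)
  have "cos \<bar>Arg s\<bar> > -1/3"
    using cos_monotone_0_pi[of "\<bar>Arg s\<bar>" "arccos (-1/3)"] a0 ca A bnd by linarith
  hence x3: "3 * Re s > - cmod s" using cA r by (simp add: field_simps)
  have ry: "(cmod s)^2 = (Re s)^2 + (Im s)^2" by (simp add: cmod_power2)
  define \<sigma> where "\<sigma> = ((cmod s + Re s) / 2 + (- Re s * cmod s) / (2 * (cmod s + Re s))) / 2"
  note al = alg[OF r x x3 ry, folded \<sigma>_def]
  have sq: "(Re (csqrt s))^2 = (cmod s + Re s) / 2"
  proof -
    have "cmod s + Re s > 0" using x3 r by linarith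
    hence "(cmod s + Re s) / 2 \<ge> 0" by simp
    thus ?thesis by simp
  qed
  show "\<exists>\<sigma>::real>0. s \<in> Omega \<sigma> \<and> \<sigma> < (Re (csqrt s))^2"
    apply (rule exI[of _ \<sigma>])
    using al x sq unfolding Omega_def Omega1_def Omega2_def by auto
qed

end
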